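(* $R_{\mathrm{POVM}}(4)=R(4)$, and $\gamma(\omega_{1/3})=N(\tfrac13)$.
   Context: Qubit POVM: finite family $\{\Pi_i\}_{i=1}^n$ of positive semidefinite operators summing to $\mathbb{I}$; it simulates $\{M_{a|x}\}$ if $M_{a|x}=\sum_i p(a|x,i)\Pi_i$ with $p(a|x,i)\ge0$, $\sum_a p(a|x,i)=1$. $\mathcal{P}_r$: two-outcome POVMs $\{\tfrac12(\mathbb{I}\pm r\hat n\cdot\vec\sigma)\}$ over all unit $\hat n\in\mathbb{R}^3$. $R(n)$: supremum of $r$ such that some $n$-outcome qubit POVM simulates $\mathcal{P}_r$. $R_{\mathrm{POVM}}(n)$: supremum of $r$ such that some $n$-outcome qubit POVM simulates the family of all noisy POVMs $\{rM_a+(1-r)\mathrm{Tr}(M_a)\mathbb{I}/2\}_a$, $\{M_a\}$ ranging over all (finite-outcome) qubit POVMs. $N(r)$: smallest $n$ such that some $n$-outcome qubit POVM simulates $\mathcal{P}_r$. $\omega_r=r|\Psi^-\rangle\langle\Psi^-|+(1-r)\mathbb{I}\otimes\mathbb{I}/4$. The assemblage generated from $\rho_{AB}$ by POVMs $\{M_{a|x}\}$ on $A$ is $\sigma_{a|x}=\mathrm{Tr}_A[(M_{a|x}\otimes\mathbb{I})\rho_{AB}]$; an LHS model of size $n$ is a distribution $p(i)$ on $\{1,\dots,n\}$, states $\rho_i$ on $B$ and $p(a|x,i)$ with $\sigma_{a|x}=\sum_{i=1}^n p(a|x,i)p(i)\rho_i$. $\gamma(\rho_{AB})$: smallest $n$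 such that every assemblage generated from $\rho_{AB}$ by any family of POVMs on $A$ admits an LHS model of size $n$. *)

theory Defs
  imports "HOL-Analysis.Analysis"
begin

type_synonym qop = "complex^2^2"
type_synonym qqop = "complex^(2 \<times> 2)^(2 \<times> 2)"

definition psd :: "complex^'n^'n \<Rightarrow> bool" where
  "psd A \<longleftrightarrow> (\<forall>i j. A $ i $ j = cnj (A $ j $ i)) \<and>
     (\<forall>v :: complex^'n. 0 \<le> Re (\<Sum>i\<in>UNIV. cnj (v $ i) * (A *v v) $ i))"

definition density :: "complex^'n^'n \<Rightarrow> bool" where
  "density A \<longleftrightarrow> psd A \<and> trace A = 1"

definition is_povm :: "nat \<Rightarrow> (nat \<Rightarrow> qop) \<Rightarrow> bool" where
  "is_povm n P \<longleftrightarrow> (\<forall>i<n. psd (P i)) \<and> (\<Sum>i<n. P i) = mat 1"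

definition simulates :: "nat \<Rightarrow> (nat \<Rightarrow> qop) \<Rightarrow> 'x set \<Rightarrow> ('x \<Rightarrow> nat) \<Rightarrow> ('x \<Rightarrow> nat \<Rightarrow> qop) \<Rightarrow> bool" where
  "simulates n P X k M \<longleftrightarrow> (\<forall>x\<in>X. \<exists>p :: nat \<Rightarrow> nat \<Rightarrow> real.
      (\<forall>a<k x. \<forall>i<n. 0 \<le> p a i) \<and>
      (\<forall>i<n. (\<Sum>a<k x. p a i) = 1) \<and>
      (\<forall>a<k x. M x a = (\<Sum>i<n. p a i *\<^sub>R P i)))"

definition sigma_x :: qop where
  "sigma_x = (\<chi> i j. if i \<noteq> j then 1 else 0)"
definition sigma_y :: qop where
  "sigma_y = (\<chi> i j. if i = 1 \<and> j = 2 then - \<i> else if i = 2 \<and> j = 1 then \<i> else 0)"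
definition sigma_z :: qop where
  "sigma_z = (\<chi> i j. if i = j then (if i = 1 then 1 else -1) else 0)"

definition pauli_dot :: "real^3 \<Rightarrow> qop" where
  "pauli_dot v = v $ 1 *\<^sub>R sigma_x + v $ 2 *\<^sub>R sigma_y + v $ 3 *\<^sub>R sigma_z"

definition unit_sphere :: "(real^3) set" where
  "unit_sphere = {v. norm v = 1}"

definition Pfam :: "real \<Rightarrow> real^3 \<Rightarrow> nat \<Rightarrow> qop" where
  "Pfam r v a = (if a = 0 then (1/2) *\<^sub>R (mat 1 + r *\<^sub>R pauli_dot v)
                 else (1/2) *\<^sub>R (mat 1 - r *\<^sub>R pauli_dot v))"

definition R :: "nat \<Rightarrow> real" where
  "R n = Sup {r. 0 \<le> r \<and> r \<le> 1 \<and>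
      (\<exists>P. is_povm n P \<and> simulates n P unit_sphere (\<lambda>_. 2) (Pfam r))}"

definition N :: "real \<Rightarrow> nat" where
  "N r = (LEAST n. \<exists>P. is_povm n P \<and> simulates n P unit_sphere (\<lambda>_. 2) (Pfam r))"

text \<open>All finite-outcome qubit POVMs, as pairs (number of outcomes, effects).\<close>
definition all_povms :: "(nat \<times> (nat \<Rightarrow> qop)) set" where
  "all_povms = {(m, M). is_povm m M}"

definition noisy :: "real \<Rightarrow> (nat \<times> (nat \<Rightarrow> qop)) \<Rightarrow> nat \<Rightarrow> qop" where
  "noisy r x a = r *\<^sub>R snd x a + mat (complex_of_real ((1 - r) / 2) * trace (snd x a))"

definition R_POVM :: "nat \<Rightarrow> real" where
  "R_POVM n = Sup {r. 0 \<le> r \<and> r \<le> 1 \<and>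
      (\<exists>P. is_povm n P \<and> simulates n P all_povms fst (noisy r))}"

definition kron :: "qop \<Rightarrow> qop \<Rightarrow> qqop" where
  "kron A B = (\<chi> u w. A $ fst u $ fst w * B $ snd u $ snd w)"

definition ptrace_A :: "qqop \<Rightarrow> qop" where
  "ptrace_A M = (\<chi> j l. \<Sum>i\<in>UNIV. M $ (i, j) $ (i, l))"

text \<open>Singlet |Psi-> = (|01> - |10>)/sqrt 2, basis |0> = index 1, |1> = index 2.\<close>
definition psi_minus :: "complex^(2 \<times> 2)" where
  "psi_minus = (\<chi> u. if fst u = 1 \<and> snd u = 2 then complex_of_real (1 / sqrt 2)
                         else if fst u = 2 \<and> snd u = 1 then - complex_of_real (1 / sqrt 2) else 0)"

definition singlet :: qqop where
  "singlet = (\<chi> a b. psi_minus $ a * cnj (psi_minus $ b))"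

definition omega :: "real \<Rightarrow> qqop" where
  "omega r = r *\<^sub>R singlet + ((1 - r) / 4) *\<^sub>R mat 1"

definition assemblage :: "qqop \<Rightarrow> qop \<Rightarrow> qop" where
  "assemblage \<rho> M = ptrace_A ((kron M (mat 1)) ** \<rho>)"

definition has_LHS :: "nat \<Rightarrow> qqop \<Rightarrow> (nat \<times> (nat \<Rightarrow> qop)) set \<Rightarrow> bool" where
  "has_LHS n \<rho> X \<longleftrightarrow> (\<exists>(q :: nat \<Rightarrow> real) (st :: nat \<Rightarrow> qop) (p :: nat \<times> (nat \<Rightarrow> qop) \<Rightarrow> nat \<Rightarrow> nat \<Rightarrow> real).
      (\<forall>i<n. 0 \<le> q i) \<and> (\<Sum>i<n. q i) = 1 \<and> (\<forall>i<n. density (st i)) \<and>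
      (\<forall>x\<in>X. (\<forall>a<fst x. \<forall>i<n. 0 \<le> p x a i) \<and>
              (\<forall>i<n. (\<Sum>a<fst x. p x a i) = 1) \<and>
              (\<forall>a<fst x. assemblage \<rho> (snd x a) = (\<Sum>i<n. (p x a i * q i) *\<^sub>R st i))))"

definition gamma :: "qqop \<Rightarrow> nat" where
  "gamma \<rho> = (LEAST n. \<forall>X. X \<subseteq> all_povms \<longrightarrow> has_LHS n \<rho> X)"

end

theory Submission
  imports Defs
begin


lemma sum_UNIV_2x2: "sum f (UNIV :: (2\<times>2) set) = f (1,1) + f (1,2) + f (2,1) + f (2,2)"
proof -
  have "sum f (UNIV :: (2\<times>2) set) = sum f (UNIV \<times> UNIV)" by simp
  also have "\<dots> = (\<Sum>i\<in>UNIV. \<Sum>j\<in>UNIV. f (i,j))" by (simp add: sum.cartesian_product)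
  finally show ?thesis by (simp add: sum_2 ac_simps)
qed

lemma cscale[simp]: "(x::real) *\<^sub>R (z::complex) = complex_of_real x * z" by (simp add: complex_eq_iff)

lemma ofreal_ent[simp]: "(of_real r :: qop) $ i $ j = complex_of_real r"
  by (simp add: of_real_def del: cscale)

lemma sc_ent[simp]: "((r::real) *\<^sub>R (A::qop)) $ i $ j = complex_of_real r * A$i$j"
  by (simp only: vector_scaleR_component cscale)

lemma pauli_11[simp]: "pauli_dot v $ 1 $ 1 = complex_of_real (v$3)"
  by (simp add: pauli_dot_def sigma_x_def sigma_y_def sigma_z_def)
lemma pauli_22[simp]: "pauli_dot v $ 2 $ 2 = - complex_of_real (v$3)"
  by (simp add: pauli_dot_def sigma_x_def sigma_y_def sigma_z_def)
lemma pauli_12[simp]: "pauli_dot v $ 1 $ 2 = complex_of_real (v$1) - complex_of_real (v$2) * \<i>"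
  by (simp add: pauli_dot_def sigma_x_def sigma_y_def sigma_z_def)
lemma pauli_21[simp]: "pauli_dot v $ 2 $ 1 = complex_of_real (v$1) + complex_of_real (v$2) * \<i>"
  by (simp add: pauli_dot_def sigma_x_def sigma_y_def sigma_z_def)

lemma mat1_entries[simp]: "(mat 1 :: qop) $ 1 $ 1 = 1" "(mat 1 :: qop) $ 2 $ 2 = 1"
   "(mat 1 :: qop) $ 1 $ 2 = 0" "(mat 1 :: qop) $ 2 $ 1 = 0"
  by (simp_all add: mat_def)

lemma qop_eq: "(A::qop) = B \<longleftrightarrow> A$1$1 = B$1$1 \<and> A$1$2 = B$1$2 \<and> A$2$1 = B$2$1 \<and> A$2$2 = B$2$2"
  by (auto simp: vec_eq_iff forall_2)

definition coefI :: "qop \<Rightarrow> real" where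
  "coefI A = Re (A$1$1 + A$2$2) / 2"
definition bvec :: "qop \<Rightarrow> real^3" where
  "bvec A = vector [Re (A$1$2), - Im (A$1$2), Re (A$1$1 - A$2$2) / 2]"

lemma bvec_comp[simp]: "bvec A $ 1 = Re (A$1$2)" "bvec A $ 2 = - Im (A$1$2)"
  "bvec A $ 3 = Re (A$1$1 - A$2$2) / 2"
  by (simp_all add: bvec_def)

definition herm :: "qop \<Rightarrow> bool" where
  "herm A \<longleftrightarrow> (\<forall>i j. A $ i $ j = cnj (A $ j $ i))"

lemma herm_iff: "herm A \<longleftrightarrow> Im (A$1$1) = 0 \<and> Im (A$2$2) = 0 \<and> A$2$1 = cnj (A$1$2)"
  unfolding herm_def forall_2 by (auto simp: complex_eq_iff)

lemma psd_herm: "psd A \<Longrightarrow> herm A"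
  unfolding psd_def herm_def by blast

lemma herm_decomp: "herm A \<Longrightarrow> A = coefI A *\<^sub>R mat 1 + pauli_dot (bvec A)"
  unfolding herm_iff qop_eq coefI_def
  by (simp add: complex_eq_iff field_simps)

lemma coefI_decomp[simp]: "coefI (c *\<^sub>R mat 1 + pauli_dot b) = c"
  by (simp add: coefI_def)
lemma bvec_decomp[simp]: "bvec (c *\<^sub>R mat 1 + pauli_dot b) = b"
  by (simp add: vec_eq_iff forall_3)

definition vec2 :: "complex \<Rightarrow> complex \<Rightarrow> complex^2" where
  "vec2 x y = (\<chi> i. if i = 1 then x else y)"
lemma vec2_ent[simp]: "vec2 x y $ 1 = x" "vec2 x y $ 2 = y"
  by (simp_all add: vec2_def)

lemma qf_formula:
  assumes "herm A"
  shows "Re (\<Sum>i\<in>UNIV. cnj (v$i) * (A *v v)$i) =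
     Re (A$1$1) * (cmod (v$1))\<^sup>2 + Re (A$2$2) * (cmod (v$2))\<^sup>2 + 2 * Re (cnj (v$1) * A$1$2 * v$2)"
  using assms unfolding herm_iff cmod_power2
  by (simp add: matrix_vector_mult_def sum_2 algebra_simps power2_eq_square)

lemma real_amgm:
  fixes p q w X Y :: real
  assumes "0 \<le> p" "0 \<le> q" "w\<^sup>2 \<le> p * q" "0 \<le> w" "0 \<le> X" "0 \<le> Y"
  shows "2 * w * X * Y \<le> p * X\<^sup>2 + q * Y\<^sup>2"
proof (cases "p = 0")
  case True
  then have "w * w \<le> 0" using assms by (simp add: power2_eq_square)
  then have "w = 0" using assms(4) by (metis mult_eq_0_iff mult_nonneg_nonneg order_antisym)
  then show ?thesis using assms True by simp
next
  case False
  then have pp: "p > 0" using assms by simp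
  have "0 \<le> (p*X - w*Y)\<^sup>2 + (p*q - w\<^sup>2) * Y\<^sup>2" using assms by simp
  also have "\<dots> = p * (p * X\<^sup>2 + q * Y\<^sup>2 - 2 * w * X * Y)" by (simp add: algebra_simps power2_eq_square)
  finally have "0 \<le> p * (p * X\<^sup>2 + q * Y\<^sup>2 - 2 * w * X * Y)" .
  then have "0 \<le> p * X\<^sup>2 + q * Y\<^sup>2 - 2 * w * X * Y" using pp by (simp add: zero_le_mult_iff)
  then show ?thesis by simp
qed

lemma norm3_sq: "(norm (b::real^3))\<^sup>2 = (b$1)\<^sup>2 + (b$2)\<^sup>2 + (b$3)\<^sup>2"
  unfolding power2_norm_eq_inner inner_vec_def sum_3 by (simp add: power2_eq_square)

lemma norm3_le: "norm (b::real^3) \<le> c \<longleftrightarrow> 0 \<le> c \<and> (b$1)\<^sup>2 + (b$2)\<^sup>2 + (b$3)\<^sup>2 \<le> c\<^sup>2"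
  by (metis norm3_sq norm_ge_zero order_trans power2_le_iff_abs_le abs_of_nonneg power_mono)

lemma psd_bloch:
  assumes "psd A"
  shows "norm (bvec A) \<le> coefI A"
proof -
  have h: "herm A" using assms psd_herm by blast
  have qf: "\<And>v::complex^2. 0 \<le> Re (A$1$1) * (cmod (v$1))\<^sup>2 + Re (A$2$2) * (cmod (v$2))\<^sup>2 + 2 * Re (cnj (v$1) * A$1$2 * v$2)"
  proof -
    fix v :: "complex^2"
    have "0 \<le> Re (\<Sum>i\<in>UNIV. cnj (v$i) * (A *v v)$i)" using assms unfolding psd_def by blast
    then show "0 \<le> Re (A$1$1) * (cmod (v$1))\<^sup>2 + Re (A$2$2) * (cmod (v$2))\<^sup>2 + 2 * Re (cnj (v$1) * A$1$2 * v$2)"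
      by (simp only: qf_formula[OF h])
  qed
  define a where "a = Re (A$1$1)"
  define d where "d = Re (A$2$2)"
  define w where "w = (cmod (A$1$2))\<^sup>2"
  have a0: "0 \<le> a" using qf[of "vec2 1 0"] by (simp add: a_def)
  have d0: "0 \<le> d" using qf[of "vec2 0 1"] by (simp add: d_def)
  have w0: "0 \<le> w" by (simp add: w_def)
  have key: "\<And>t::real. 0 \<le> a * t\<^sup>2 + d * w - 2 * t * w"
  proof -
    fix t :: real
    have e: "Re (cnj (complex_of_real t) * A$1$2 * (- cnj (A$1$2))) = - t * w"
      unfolding w_def cmod_power2 by (simp add: power2_eq_square algebra_simps)
    show "0 \<le> a * t\<^sup>2 + d * w - 2 * t * w"
      using qf[of "vec2 (complex_of_real t) (- cnj (A$1$2))"] e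
      by (simp add: a_def d_def w_def power2_eq_square)
  qed
  have wad: "w \<le> a * d"
  proof (cases "a = 0")
    case True
    have "0 \<le> d * w - 2 * (d + 1) * w" using key[of "d+1"] True by simp
    then have "(d + 2) * w \<le> (d + 2) * 0" by (simp add: algebra_simps)
    then have "w \<le> 0" using mult_le_cancel_left_pos[of "d+2" w 0] d0 by simp
    then have "w = 0" using w0 by simp
    then show ?thesis using True by simp
  next
    case False
    then have ap: "a > 0" using a0 by simp
    have "0 \<le> a * (w/a)\<^sup>2 + d * w - 2 * (w/a) * w" using key by blast
    also have "\<dots> = w * (a * d - w) / a" using ap by (simp add: field_simps power2_eq_square)
    finally have "0 \<le> w * (a * d - w)" using ap by (simp add: zero_le_divide_iff)
    moreover have "0 \<le> a * d" using ap d0 by simp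
    ultimately show ?thesis using w0 by (auto simp: zero_le_mult_iff)
  qed
  show ?thesis unfolding norm3_le
  proof
    show "0 \<le> coefI A" using a0 d0 by (simp add: coefI_def a_def d_def)
    have h1: "(bvec A $ 1)\<^sup>2 + (bvec A $ 2)\<^sup>2 = w" unfolding w_def cmod_power2 by simp
    have h3: "(bvec A $ 3) = (a - d)/2" by (simp add: a_def d_def)
    have hc: "coefI A = (a + d)/2" by (simp add: coefI_def a_def d_def)
    have sq: "((a+d)/2)\<^sup>2 - ((a-d)/2)\<^sup>2 = a*d" by (simp add: power2_eq_square field_simps)
    show "(bvec A $ 1)\<^sup>2 + (bvec A $ 2)\<^sup>2 + (bvec A $ 3)\<^sup>2 \<le> (coefI A)\<^sup>2"
      unfolding h3 hc using h1 sq wad by linarith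
  qed
qed

lemma psd_of_bloch:
  assumes "norm b \<le> c"
  shows "psd (c *\<^sub>R mat 1 + pauli_dot b)"
proof -
  let ?A = "c *\<^sub>R mat 1 + pauli_dot b"
  have h: "herm ?A" unfolding herm_iff by simp
  have c: "0 \<le> c" and bb: "(b$1)\<^sup>2 + (b$2)\<^sup>2 + (b$3)\<^sup>2 \<le> c\<^sup>2" using assms norm3_le by auto
  have "(b$3)\<^sup>2 \<le> c\<^sup>2" using bb zero_le_power2[of "b$1"] zero_le_power2[of "b$2"] by linarith
  then have b3: "\<bar>b$3\<bar> \<le> c" using c abs_le_square_iff[of "b$3" c] by simp
  show ?thesis unfolding psd_def
  proof (intro conjI allI)
    fix i j show "?A $ i $ j = cnj (?A $ j $ i)" using h unfolding herm_def by blast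
  next
    fix v :: "complex^2"
    define z where "z = ?A $ 1 $ 2"
    have cz: "(cmod z)\<^sup>2 = (b$1)\<^sup>2 + (b$2)\<^sup>2" by (simp add: z_def cmod_power2)
    have f1: "2 * cmod z * cmod (v$1) * cmod (v$2) \<le> (c + b$3) * (cmod (v$1))\<^sup>2 + (c - b$3) * (cmod (v$2))\<^sup>2"
    proof (rule real_amgm)
      show "0 \<le> c + b$3" "0 \<le> c - b$3" using b3 by auto
      show "(cmod z)\<^sup>2 \<le> (c + b$3) * (c - b$3)" unfolding cz using bb by (simp add: algebra_simps power2_eq_square)
    qed auto
    have f2: "- Re (cnj (v$1) * z * v$2) \<le> cmod z * cmod (v$1) * cmod (v$2)"
      by (metis abs_Re_le_cmod abs_le_D2 complex_mod_cnj mult.commute norm_mult)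
    show "0 \<le> Re (\<Sum>i\<in>UNIV. cnj (v $ i) * (?A *v v) $ i)"
    proof -
      have e1: "Re (?A$1$1) = c + b$3" and e2: "Re (?A$2$2) = c - b$3" by simp_all
      show ?thesis unfolding qf_formula[OF h] e1 e2 z_def[symmetric] using f1 f2 by linarith
    qed
  qed
qed

lemma pauli_linear: "linear pauli_dot"
  by (rule linearI) (simp_all add: pauli_dot_def algebra_simps)

lemma pauli_add: "pauli_dot (a + b) = pauli_dot a + pauli_dot b"
  using pauli_linear by (rule linear_add)
lemma pauli_scale: "pauli_dot (r *\<^sub>R a) = r *\<^sub>R pauli_dot a"
  using pauli_linear by (rule linear_scale)
lemma pauli_sum: "pauli_dot (sum f S) = (\<Sum>i\<in>S. pauli_dot (f i))"
  using pauli_linear by (rule linear_sum)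
lemma pauli_zero: "pauli_dot 0 = 0"
  using pauli_linear by (rule linear_0)

lemma coefI_linear: "linear coefI"
  by (rule linearI) (simp_all add: coefI_def field_simps)
lemma bvec_linear: "linear bvec"
  by (rule linearI) (simp_all add: vec_eq_iff forall_3 field_simps)

lemma coefI_sum: "coefI (sum f S) = (\<Sum>i\<in>S. coefI (f i))"
  using coefI_linear by (rule linear_sum)
lemma bvec_sum: "bvec (sum f S) = (\<Sum>i\<in>S. bvec (f i))"
  using bvec_linear by (rule linear_sum)
lemma coefI_mat1[simp]: "coefI (mat 1) = 1" by (simp add: coefI_def)
lemma bvec_mat1[simp]: "bvec (mat 1) = 0" by (simp add: vec_eq_iff forall_3)

lemma sum_decomp:
  "(\<Sum>i\<in>S. f i *\<^sub>R (c i *\<^sub>R mat 1 + pauli_dot (b i))) =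
     (\<Sum>i\<in>S. f i * c i) *\<^sub>R mat 1 + pauli_dot (\<Sum>i\<in>S. f i *\<^sub>R b i)"
  by (simp add: scaleR_add_right sum.distrib scaleR_sum_left pauli_sum pauli_scale)

definition s3 :: real where "s3 = 1 / sqrt 3"
lemma s3_sq: "s3 * s3 = 1/3"
  by (simp add: s3_def)

definition tv :: "nat \<Rightarrow> real^3" where
  "tv i = (if i = 0 then vector [s3, s3, s3] else if i = 1 then vector [s3, -s3, -s3]
           else if i = 2 then vector [-s3, s3, -s3] else vector [-s3, -s3, s3])"

lemma sum4: "(\<Sum>i<(4::nat). f i) = f 0 + f 1 + f 2 + (f 3 :: 'a :: comm_monoid_add)"
proof -
  have "{..<(4::nat)} = {0,1,2,3}" by auto
  then show ?thesis by (simp add: ac_simps)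
qed

lemma tv_comp[simp]:
  "tv 0 $ 1 = s3" "tv 0 $ 2 = s3" "tv 0 $ 3 = s3"
  "tv (Suc 0) $ 1 = s3" "tv (Suc 0) $ 2 = -s3" "tv (Suc 0) $ 3 = -s3"
  "tv 2 $ 1 = -s3" "tv 2 $ 2 = s3" "tv 2 $ 3 = -s3"
  "tv 3 $ 1 = -s3" "tv 3 $ 2 = -s3" "tv 3 $ 3 = s3"
  by (simp_all add: tv_def)

lemma inner3: "inner (x::real^3) y = x$1 * y$1 + x$2 * y$2 + x$3 * y$3"
  by (simp add: inner_vec_def sum_3)

lemma tv_norm: "i < 4 \<Longrightarrow> norm (tv i) = 1"
proof -
  assume "i < 4"
  then have "i = 0 \<or> i = 1 \<or> i = 2 \<or> i = 3" by auto
  then have "(tv i $ 1)\<^sup>2 + (tv i $ 2)\<^sup>2 + (tv i $ 3)\<^sup>2 = 1"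
    using s3_sq by (auto simp: power2_eq_square)
  then have "(norm (tv i))\<^sup>2 = 1" by (simp add: norm3_sq)
  then show ?thesis using norm_ge_zero[of "tv i"] by (auto simp: power2_eq_1_iff)
qed



lemma s3_sq': "s3 * (s3 * x) = x / 3" using s3_sq by (metis mult.assoc mult.commute times_divide_eq_left mult_1)

lemma mom0: "(\<Sum>i<4. (\<alpha> + inner \<beta> (tv i))) = 4 * \<alpha>"
  by (simp add: sum4 inner3)

lemma mom1: "(\<Sum>i<4. (\<alpha> + inner \<beta> (tv i)) *\<^sub>R tv i) = (4/3) *\<^sub>R \<beta>"
  unfolding vec_eq_iff forall_3 sum4
  by (simp add: inner3 algebra_simps s3_sq')

lemma tv_sum: "(\<Sum>i<4. tv i) = 0"
  unfolding vec_eq_iff forall_3 sum4 by simp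

definition Tet :: "nat \<Rightarrow> qop" where
  "Tet i = (1/4) *\<^sub>R mat 1 + pauli_dot ((1/4) *\<^sub>R tv i)"

lemma Tet_povm: "is_povm 4 Tet"
  unfolding is_povm_def
proof (intro conjI allI impI)
  fix i :: nat assume "i < 4"
  then have "norm ((1/4) *\<^sub>R tv i) \<le> 1/4" using tv_norm by simp
  then show "psd (Tet i)" unfolding Tet_def by (rule psd_of_bloch)
next
  have "(\<Sum>i<4. Tet i) = (\<Sum>i<4. (1::real) *\<^sub>R ((1/4) *\<^sub>R mat 1 + pauli_dot ((1/4) *\<^sub>R tv i)))"
    by (simp add: Tet_def)
  also have "\<dots> = mat 1"
  proof -
    have e1: "(\<Sum>i<(4::nat). (1::real) * (1/4)) = 1" by (simp add: sum4)
    have e2: "(\<Sum>i<4. (1::real) *\<^sub>R ((1/4) *\<^sub>R tv i)) = 0"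
      unfolding sum4 vec_eq_iff forall_3 by simp
    show ?thesis unfolding sum_decomp e1 e2 pauli_zero by simp
  qed
  finally show "(\<Sum>i<4. Tet i) = mat 1" .
qed

lemma herm_povm: "is_povm m M \<Longrightarrow> a < m \<Longrightarrow> herm (M a)"
  unfolding is_povm_def using psd_herm by blast

lemma povm_coef_sum: "is_povm m M \<Longrightarrow> (\<Sum>a<m. coefI (M a)) = 1"
  unfolding is_povm_def by (metis coefI_sum coefI_mat1)
lemma povm_bvec_sum: "is_povm m M \<Longrightarrow> (\<Sum>a<m. bvec (M a)) = 0"
  unfolding is_povm_def by (metis bvec_sum bvec_mat1)

definition tp :: "(nat \<Rightarrow> qop) \<Rightarrow> nat \<Rightarrow> nat \<Rightarrow> real" where
  "tp M a i = coefI (M a) + inner (bvec (M a)) (tv i)"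

lemma tp_nonneg:
  assumes "is_povm m M" "a < m" "i < 4"
  shows "0 \<le> tp M a i"
proof -
  have "psd (M a)" using assms unfolding is_povm_def by blast
  then have n: "norm (bvec (M a)) \<le> coefI (M a)" by (rule psd_bloch)
  have "\<bar>inner (bvec (M a)) (tv i)\<bar> \<le> norm (bvec (M a)) * norm (tv i)"
    by (rule Cauchy_Schwarz_ineq2)
  then have "\<bar>inner (bvec (M a)) (tv i)\<bar> \<le> norm (bvec (M a))" using tv_norm assms(3) by simp
  then show ?thesis unfolding tp_def using n by linarith
qed

lemma tp_sum:
  assumes "is_povm m M"
  shows "(\<Sum>a<m. tp M a i) = 1"
proof -
  have "(\<Sum>a<m. tp M a i) = (\<Sum>a<m. coefI (M a)) + inner (\<Sum>a<m. bvec (M a)) (tv i)"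
    unfolding tp_def by (simp add: sum.distrib inner_sum_left)
  then show ?thesis using povm_coef_sum[OF assms] povm_bvec_sum[OF assms] by simp
qed

lemma tet_comb:
  "(\<Sum>i<4. (\<alpha> + inner \<beta> (tv i)) *\<^sub>R Tet i) = \<alpha> *\<^sub>R mat 1 + pauli_dot ((1/3) *\<^sub>R \<beta>)"
proof -
  have "(\<Sum>i<4. (\<alpha> + inner \<beta> (tv i)) *\<^sub>R Tet i) =
     (\<Sum>i<4. (\<alpha> + inner \<beta> (tv i)) * (1/4)) *\<^sub>R mat 1 +
     pauli_dot (\<Sum>i<4. (\<alpha> + inner \<beta> (tv i)) *\<^sub>R ((1/4) *\<^sub>R tv i))"
    unfolding Tet_def by (rule sum_decomp)
  also have "(\<Sum>i<4. (\<alpha> + inner \<beta> (tv i)) * (1/4)) = \<alpha>"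
    using mom0[of \<alpha> \<beta>] by (simp add: sum_divide_distrib[symmetric])
  also have "(\<Sum>i<4. (\<alpha> + inner \<beta> (tv i)) *\<^sub>R ((1/4) *\<^sub>R tv i)) = (1/4) *\<^sub>R ((4/3) *\<^sub>R \<beta>)"
    unfolding vec_eq_iff forall_3 sum4 by (simp add: inner3 algebra_simps s3_sq')
  finally show ?thesis by simp
qed

lemma noisy_gen:
  "r *\<^sub>R (c *\<^sub>R mat 1 + pauli_dot b) + mat (complex_of_real ((1 - r) / 2) * trace (c *\<^sub>R mat 1 + pauli_dot b))
    = c *\<^sub>R mat 1 + pauli_dot (r *\<^sub>R b)"
proof -
  have tr: "trace (c *\<^sub>R mat 1 + pauli_dot b) = complex_of_real (2*c)"
    by (simp add: trace_def sum_2 complex_eq_iff)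
  have k: "(1 - r)/2 * (2*c) = c - r*c" by (simp add: field_simps)
  show ?thesis unfolding qop_eq tr
    by (simp add: mat_def complex_eq_iff field_simps)
qed

lemma noisy_decomp:
  assumes "herm A"
  shows "r *\<^sub>R A + mat (complex_of_real ((1 - r) / 2) * trace A) = coefI A *\<^sub>R mat 1 + pauli_dot (r *\<^sub>R bvec A)"
  using assms unfolding herm_iff qop_eq
  using noisy_gen[of r "coefI A" "bvec A"] herm_decomp[OF assms] by metis

lemma tet_sim_noisy: "simulates 4 Tet all_povms fst (noisy (1/3))"
  unfolding simulates_def
proof
  fix x assume "x \<in> all_povms"
  then obtain m M where x: "x = (m, M)" and pv: "is_povm m M" unfolding all_povms_def by auto
  show "\<exists>p. (\<forall>a<fst x. \<forall>i<4. 0 \<le> p a i) \<and> (\<forall>i<4. (\<Sum>a<fst x. p a i) = 1) \<and>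
          (\<forall>a<fst x. noisy (1/3) x a = (\<Sum>i<4. p a i *\<^sub>R Tet i))"
  proof (rule exI[of _ "tp M"], intro conjI allI impI)
    fix a i :: nat assume "a < fst x" "i < 4" then show "0 \<le> tp M a i" using tp_nonneg pv x by simp
  next
    fix i :: nat assume "i < 4" show "(\<Sum>a<fst x. tp M a i) = 1" using tp_sum pv x by simp
  next
    fix a :: nat assume "a < fst x"
    then have h: "herm (M a)" using herm_povm pv x by simp
    show "noisy (1/3) x a = (\<Sum>i<4. tp M a i *\<^sub>R Tet i)"
      unfolding tp_def tet_comb noisy_def x using noisy_decomp[OF h, of "1/3"] by simp
  qed
qed



lemma Pfam0: "Pfam r v 0 = (1/2) *\<^sub>R mat 1 + pauli_dot ((r/2) *\<^sub>R v)"
  unfolding qop_eq Pfam_def by (simp add: complex_eq_iff)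
lemma Pfam1: "a \<noteq> 0 \<Longrightarrow> Pfam r v a = (1/2) *\<^sub>R mat 1 + pauli_dot ((-r/2) *\<^sub>R v)"
  unfolding qop_eq Pfam_def by (simp add: complex_eq_iff)

lemma sum_lt2: "(\<Sum>a<(2::nat). f a) = f 0 + (f 1 :: 'a::comm_monoid_add)"
  by (simp add: eval_nat_numeral)

lemma proj_povm:
  assumes "v \<in> unit_sphere"
  shows "is_povm 2 (Pfam 1 v)"
  unfolding is_povm_def
proof (intro conjI allI impI)
  have nv: "norm v = 1" using assms unfolding unit_sphere_def by simp
  fix a :: nat assume "a < 2"
  show "psd (Pfam 1 v a)"
  proof (cases "a = 0")
    case True
    have "norm ((1/2) *\<^sub>R v) \<le> 1/2" using nv by simp
    then show ?thesis unfolding True Pfam0 by (intro psd_of_bloch) simp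
  next
    case False
    have "norm ((-1/2) *\<^sub>R v) \<le> 1/2" using nv by simp
    then show ?thesis unfolding Pfam1[OF False] by (intro psd_of_bloch) simp
  qed
next
  show "(\<Sum>a<2. Pfam 1 v a) = mat 1"
    unfolding sum_lt2 qop_eq Pfam_def by (simp add: complex_eq_iff field_simps)
qed

lemma noisy_proj:
  assumes "a < 2"
  shows "noisy r (2, Pfam 1 v) a = Pfam r v a"
proof (cases "a = 0")
  case True
  show ?thesis unfolding noisy_def True Pfam0 snd_conv noisy_gen by simp
next
  case False
  show ?thesis unfolding noisy_def Pfam1[OF False] snd_conv noisy_gen by simp
qed

lemma sim_noisy_proj:
  assumes "simulates n P all_povms fst (noisy r)"
  shows "simulates n P unit_sphere (\<lambda>_. 2) (Pfam r)"
  unfolding simulates_def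
proof
  fix v assume v: "v \<in> unit_sphere"
  have mem: "(2::nat, Pfam 1 v) \<in> all_povms" using proj_povm[OF v] unfolding all_povms_def by simp
  have ex: "\<exists>p. (\<forall>a<fst (2::nat, Pfam 1 v). \<forall>i<n. 0 \<le> p a i) \<and> (\<forall>i<n. (\<Sum>a<fst (2::nat, Pfam 1 v). p a i) = 1) \<and>
      (\<forall>a<fst (2::nat, Pfam 1 v). noisy r (2::nat, Pfam 1 v) a = (\<Sum>i<n. p a i *\<^sub>R P i))"
    using assms[unfolded simulates_def, rule_format, OF mem] .
  then obtain p where p1: "\<forall>a<2. \<forall>i<n. 0 \<le> p a i" and p2: "\<forall>i<n. (\<Sum>a<2. p a i) = 1"
     and p3: "\<forall>a<2. noisy r (2, Pfam 1 v) a = (\<Sum>i<n. p a i *\<^sub>R P i)"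
    unfolding fst_conv by blast
  show "\<exists>p. (\<forall>a<2. \<forall>i<n. 0 \<le> p a i) \<and> (\<forall>i<n. (\<Sum>a<2. p a i) = 1) \<and>
          (\<forall>a<2. Pfam r v a = (\<Sum>i<n. p a i *\<^sub>R P i))"
  proof (rule exI[of _ p], intro conjI allI impI)
    fix a :: nat assume a: "a < 2"
    show "Pfam r v a = (\<Sum>i<n. p a i *\<^sub>R P i)" using p3 a noisy_proj[OF a, of r v] by simp
  qed (use p1 p2 in auto)
qed

lemma axis_comp[simp]:
  "axis (1::3) (1::real) $ 1 = 1" "axis (1::3) (1::real) $ 2 = 0" "axis (1::3) (1::real) $ 3 = 0"
  "axis (2::3) (1::real) $ 1 = 0" "axis (2::3) (1::real) $ 2 = 1" "axis (2::3) (1::real) $ 3 = 0"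
  "axis (3::3) (1::real) $ 1 = 0" "axis (3::3) (1::real) $ 2 = 0" "axis (3::3) (1::real) $ 3 = 1"
  by (simp_all add: axis_def)

lemma axis_unit: "axis k (1::real) \<in> unit_sphere" "- axis k (1::real) \<in> unit_sphere"
  unfolding unit_sphere_def by simp_all

abbreviation "PX \<equiv> pauli_dot (axis 1 1)"
abbreviation "PY \<equiv> pauli_dot (axis 2 1)"
abbreviation "PZ \<equiv> pauli_dot (axis 3 1)"

lemma basis_indep: "independent {mat 1, PX, PY, PZ}" and basis_card: "card {mat 1, PX, PY, PZ} = 4"
proof -
  have d: "mat 1 \<noteq> PX" "mat 1 \<noteq> PY" "mat 1 \<noteq> PZ" "PX \<noteq> PY" "PX \<noteq> PZ" "PY \<noteq> PZ"
    unfolding qop_eq by (simp_all add: complex_eq_iff)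
  then show "card {mat 1, PX, PY, PZ} = 4" by simp
  show "independent {mat 1, PX, PY, PZ}"
  proof (rule independent_insertI, rule notI)
    assume "mat 1 \<in> span {PX, PY, PZ}"
    then obtain k1 k2 k3 where "mat 1 - k1 *\<^sub>R PX - k2 *\<^sub>R PY - k3 *\<^sub>R PZ = 0"
      unfolding span_breakdown_eq by (auto simp: diff_diff_eq)
    then show False unfolding qop_eq by (auto simp: complex_eq_iff)
  next
    show "independent {PX, PY, PZ}"
    proof (rule independent_insertI, rule notI)
      assume "PX \<in> span {PY, PZ}"
      then obtain k2 k3 where "PX - k2 *\<^sub>R PY - k3 *\<^sub>R PZ = 0"
        unfolding span_breakdown_eq by (auto simp: diff_diff_eq)
      then show False unfolding qop_eq by (auto simp: complex_eq_iff)
    next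
      show "independent {PY, PZ}"
      proof (rule independent_insertI, rule notI)
        assume "PY \<in> span {PZ}"
        then obtain k3 where "PY - k3 *\<^sub>R PZ = 0"
          unfolding span_breakdown_eq by auto
        then show False unfolding qop_eq by (auto simp: complex_eq_iff)
      next
        have "PZ \<noteq> 0" unfolding qop_eq by simp
        then show "independent {PZ}" by simp
      qed
    qed
  qed
qed

lemma half_sum: "(1/2) *\<^sub>R ((x + s *\<^sub>R y) + (x - s *\<^sub>R y)) = (x::'a::real_vector)"
proof -
  have "(x + s *\<^sub>R y) + (x - s *\<^sub>R y) = 2 *\<^sub>R x" by (simp add: scaleR_2)
  then show ?thesis by simp
qed

lemma half_diff: "s \<noteq> 0 \<Longrightarrow> (1/(2 * s)) *\<^sub>R ((x + s *\<^sub>R y) - (x - s *\<^sub>R y)) = (y::'a::real_vector)"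
proof -
  assume s: "s \<noteq> 0"
  have "(x + s *\<^sub>R y) - (x - s *\<^sub>R y) = (2 * s) *\<^sub>R y" by (simp add: scaleR_add_left[symmetric])
  then show ?thesis using s by simp
qed

lemma dimD:
  assumes fin: "finite S" and s: "s \<noteq> 0"
    and h: "\<And>v. v \<in> unit_sphere \<Longrightarrow> mat 1 + s *\<^sub>R pauli_dot v \<in> span S"
  shows "4 \<le> card S"
proof -
  have pm: "mat 1 \<in> span S \<and> pauli_dot (axis k 1) \<in> span S" for k
  proof -
    have a: "mat 1 + s *\<^sub>R pauli_dot (axis k 1) \<in> span S" using h axis_unit by blast
    have b: "mat 1 - s *\<^sub>R pauli_dot (axis k 1) \<in> span S"
      using h[OF axis_unit(2)] by (simp add: pauli_scale[of "-1", simplified])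
    have "(1/2) *\<^sub>R ((mat 1 + s *\<^sub>R pauli_dot (axis k 1)) + (mat 1 - s *\<^sub>R pauli_dot (axis k 1))) \<in> span S"
      using span_scale[OF span_add[OF a b]] .
    moreover have "(1/(2 * s)) *\<^sub>R ((mat 1 + s *\<^sub>R pauli_dot (axis k 1)) - (mat 1 - s *\<^sub>R pauli_dot (axis k 1))) \<in> span S"
      using span_scale[OF span_diff[OF a b]] .
    ultimately show ?thesis unfolding half_sum half_diff[OF s] by blast
  qed
  have "{mat 1, PX, PY, PZ} \<subseteq> span S" using pm by auto
  then have "card {mat 1, PX, PY, PZ} \<le> card S"
    using independent_span_bound[OF fin basis_indep] by simp
  then show ?thesis using basis_card by simp
qed



lemma sim_bound:
  assumes pv: "is_povm 4 P" and sim: "simulates 4 P unit_sphere (\<lambda>_. 2) (Pfam r)" and r0: "0 \<le> r"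
  shows "r \<le> 1/3"
proof -
  have ex: "\<forall>v\<in>unit_sphere. \<exists>p. (\<forall>a<2. \<forall>i<4. 0 \<le> p a i) \<and> (\<forall>i<4. (\<Sum>a<2. p a i) = 1) \<and>
       (\<forall>a<2. Pfam r v a = (\<Sum>i<4. p a i *\<^sub>R P i))"
    using sim unfolding simulates_def .
  from bchoice[OF ex] obtain pp where pp: "\<forall>v\<in>unit_sphere. (\<forall>a<2. \<forall>i<4. 0 \<le> pp v a i) \<and> (\<forall>i<4. (\<Sum>a<2. pp v a i) = 1) \<and>
       (\<forall>a<2. Pfam r v a = (\<Sum>i<4. pp v a i *\<^sub>R P i))" by blast
  have E: "Pfam r v 0 = (\<Sum>i<4. pp v 0 i *\<^sub>R P i)" if v: "v \<in> unit_sphere" for v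
    using pp v by simp
  have B: "pp v 0 i \<le> 1" if v: "v \<in> unit_sphere" and i: "i < 4" for v i
  proof -
    have "pp v 0 i + pp v 1 i = 1" using pp v i unfolding sum_lt2 by simp
    moreover have "0 \<le> pp v 1 i" using pp v i by simp
    ultimately show ?thesis by simp
  qed
  have key: "r \<le> coefI (P j) * (r + 1)" if j: "j < 4" for j
  proof -
    define Oth where "Oth = P ` ({..<4} - {j})"
    have finOth: "finite Oth" by (simp add: Oth_def)
    have "card Oth \<le> card ({..<4::nat} - {j})" unfolding Oth_def by (rule card_image_le) simp
    also have "\<dots> = 3" using j by simp
    finally have cardOth: "card Oth \<le> 3" .
    have Pin: "P i \<in> span Oth" if "i < 4" "i \<noteq> j" for i
      using that by (auto simp: Oth_def intro: span_base)
    have psdj: "psd (P j)" using pv j unfolding is_povm_def by blast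
    define c where "c = coefI (P j)"
    define b where "b = bvec (P j)"
    have nb: "norm b \<le> c" using psd_bloch[OF psdj] by (simp add: b_def c_def)
    have c0: "0 \<le> c" using nb norm_ge_zero order_trans by blast
    have Pj: "P j = c *\<^sub>R mat 1 + pauli_dot b"
      using herm_decomp[OF psd_herm[OF psdj]] by (simp add: b_def c_def)
    have "r \<le> c * (r + 1)"
    proof (cases "P j \<in> span Oth")
      case True
      have allin: "P i \<in> span Oth" if "i < 4" for i using True Pin that by (cases "i = j") auto
      have "r = 0"
      proof (rule ccontr)
        assume rne: "r \<noteq> 0"
        have "mat 1 + r *\<^sub>R pauli_dot v \<in> span Oth" if v: "v \<in> unit_sphere" for v
        proof -
          have "mat 1 + r *\<^sub>R pauli_dot v = 2 *\<^sub>R Pfam r v 0"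
            unfolding Pfam0 pauli_scale by (simp add: scaleR_add_right)
          also have "\<dots> = 2 *\<^sub>R (\<Sum>i<4. pp v 0 i *\<^sub>R P i)" using E[OF v] by simp
          also have "\<dots> \<in> span Oth"
            apply (rule span_scale, rule span_sum, rule span_scale) using allin by auto
          finally show ?thesis .
        qed
        then have "4 \<le> card Oth" using dimD[OF finOth rne] by blast
        then show False using cardOth by simp
      qed
      then show ?thesis using c0 by simp
    next
      case False
      obtain y z where y: "y \<in> span Oth" and zo: "\<And>w. w \<in> span Oth \<Longrightarrow> orthogonal z w" and dec: "P j = y + z"
        using orthogonal_subspace_decomp_exists[of Oth "P j"] by blast
      have zy: "inner y z = 0" using zo[OF y] by (simp add: orthogonal_def inner_commute)
      have zne: "z \<noteq> 0" using False dec y by auto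
      define D where "D = inner (P j) z"
      have D: "D = inner z z" unfolding D_def dec by (simp add: inner_add_left zy)
      have Dpos: "D > 0" using zne D by simp
      define \<phi> where "\<phi> X = inner X z / D" for X
      have \<phi>0: "\<phi> (P i) = 0" if "i < 4" "i \<noteq> j" for i
        using zo[OF Pin[OF that]] by (simp add: \<phi>_def orthogonal_def inner_commute)
      have \<phi>1: "\<phi> (P j) = 1" using Dpos by (simp add: \<phi>_def D_def)
      have \<phi>sum: "\<phi> (\<Sum>i<4. a i *\<^sub>R P i) = a j" for a
      proof -
        have "\<phi> (\<Sum>i<4. a i *\<^sub>R P i) = (\<Sum>i<4. a i * \<phi> (P i))"
          by (simp add: \<phi>_def inner_sum_left sum_divide_distrib)
        also have "\<dots> = (\<Sum>i<4. if i = j then a j else 0)"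
          by (rule sum.cong) (auto simp: \<phi>0 \<phi>1)
        also have "\<dots> = a j" using j by simp
        finally show ?thesis .
      qed
      have \<phi>I: "\<phi> (mat 1) = 1"
      proof -
        have "mat 1 = (\<Sum>i<4. (\<lambda>_. 1::real) i *\<^sub>R P i)" using pv unfolding is_povm_def by simp
        then show ?thesis using \<phi>sum[of "\<lambda>_. 1"] by simp
      qed
      have \<phi>add: "\<phi> (X + Y) = \<phi> X + \<phi> Y" for X Y by (simp add: \<phi>_def inner_add_left add_divide_distrib)
      have \<phi>scale: "\<phi> (a *\<^sub>R X) = a * \<phi> X" for a X by (simp add: \<phi>_def)
      define g :: "real^3" where "g = vector [\<phi> PX, \<phi> PY, \<phi> PZ]"
      have \<phi>pauli: "\<phi> (pauli_dot v) = inner v g" for v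
      proof -
        have "pauli_dot v = v$1 *\<^sub>R PX + v$2 *\<^sub>R PY + v$3 *\<^sub>R PZ"
          unfolding qop_eq by (simp add: complex_eq_iff)
        then show ?thesis by (simp add: \<phi>add \<phi>scale g_def inner3 vector_3)
      qed
      have pv0: "pp v 0 j = 1/2 + (r/2) * inner v g" if v: "v \<in> unit_sphere" for v
      proof -
        have "pp v 0 j = \<phi> (Pfam r v 0)" using E[OF v] \<phi>sum by simp
        also have "\<dots> = 1/2 + (r/2) * inner v g" unfolding Pfam0 \<phi>add \<phi>scale \<phi>I \<phi>pauli by simp
        finally show ?thesis .
      qed
      have rg: "r * norm g \<le> 1"
      proof (cases "g = 0")
        case True then show ?thesis by simp
      next
        case False
        define v where "v = (1 / norm g) *\<^sub>R g"
        have v: "v \<in> unit_sphere" using False by (simp add: unit_sphere_def v_def)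
        have "inner v g = norm g" using False by (simp add: v_def dot_square_norm power2_eq_square)
        then have "pp v 0 j = 1/2 + (r/2) * norm g" using pv0[OF v] by simp
        moreover have "pp v 0 j \<le> 1" using B[OF v j] .
        ultimately show ?thesis by simp
      qed
      have "1 = \<phi> (P j)" using \<phi>1 by simp
      also have "\<dots> = c + inner b g" unfolding Pj \<phi>add \<phi>scale \<phi>I \<phi>pauli by simp
      also have "\<dots> \<le> c + norm b * norm g" using norm_cauchy_schwarz[of b g] by simp
      finally have one: "1 \<le> c + norm b * norm g" .
      have "norm b * (r * norm g) \<le> norm b * 1" by (rule mult_left_mono[OF rg norm_ge_zero])
      then have t1: "r * (norm b * norm g) \<le> norm b" by (simp add: algebra_simps)
      have "r * 1 \<le> r * (c + norm b * norm g)" by (rule mult_left_mono[OF one r0])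
      then have "r \<le> r * c + r * (norm b * norm g)" by (simp add: algebra_simps)
      then show ?thesis using t1 nb by (simp add: algebra_simps)
    qed
    then show ?thesis by (simp add: c_def)
  qed
  have "(\<Sum>j<(4::nat). r) \<le> (\<Sum>j<4. coefI (P j) * (r + 1))" by (rule sum_mono) (use key in auto)
  also have "\<dots> = r + 1" by (simp add: sum_distrib_right[symmetric] povm_coef_sum[OF pv])
  finally show ?thesis by simp
qed



lemma psi_vals[simp]:
  "psi_minus $ (1,1) = 0" "psi_minus $ (1,2) = complex_of_real (1 / sqrt 2)"
  "psi_minus $ (2,1) = - complex_of_real (1 / sqrt 2)" "psi_minus $ (2,2) = 0"
  by (simp_all add: psi_minus_def)

lemma sq2: "complex_of_real (1 / sqrt 2) * complex_of_real (1 / sqrt 2) = 1/2"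
proof -
  have "(1 / sqrt 2) * (1 / sqrt 2) = (1/2::real)" by (simp flip: real_sqrt_mult)
  then show ?thesis by (metis of_real_mult of_real_divide of_real_1 of_real_numeral)
qed

lemma omega_ent: "omega r $ u $ w = complex_of_real r * (psi_minus $ u * cnj (psi_minus $ w))
   + complex_of_real ((1 - r)/4) * (if u = w then 1 else 0)"
  by (simp add: omega_def singlet_def mat_def)

lemma asm_ent: "assemblage \<rho> M $ j $ l = (\<Sum>i\<in>UNIV. \<Sum>k\<in>UNIV. M$i$k * \<rho> $ (k,j) $ (i,l))"
proof -
  have "assemblage \<rho> M $ j $ l = (\<Sum>i\<in>UNIV. \<Sum>u\<in>UNIV. (kron M (mat 1)) $ (i,j) $ u * \<rho> $ u $ (i,l))"
    by (simp add: assemblage_def ptrace_A_def matrix_matrix_mult_def)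
  also have "\<dots> = (\<Sum>i\<in>UNIV. \<Sum>k\<in>UNIV. M$i$k * \<rho> $ (k,j) $ (i,l))"
  proof (rule sum.cong[OF refl])
    fix i
    have "(\<Sum>u\<in>UNIV. (kron M (mat 1)) $ (i,j) $ u * \<rho> $ u $ (i,l))
        = (\<Sum>k\<in>UNIV. \<Sum>m\<in>UNIV. (kron M (mat 1)) $ (i,j) $ (k,m) * \<rho> $ (k,m) $ (i,l))"
      by (simp add: UNIV_Times_UNIV[symmetric] sum.cartesian_product del: UNIV_Times_UNIV)
    also have "\<dots> = (\<Sum>k\<in>UNIV. M$i$k * \<rho> $ (k,j) $ (i,l))"
      by (simp add: kron_def mat_def sum_2 forall_2 if_distrib cong: if_cong) (smt (verit) exhaust_2)
    finally show "(\<Sum>u\<in>UNIV. (kron M (mat 1)) $ (i,j) $ u * \<rho> $ u $ (i,l)) = (\<Sum>k\<in>UNIV. M$i$k * \<rho> $ (k,j) $ (i,l))" .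
  qed
  finally show ?thesis .
qed

lemma sqrt2_assoc: "sqrt 2 * (sqrt 2 * x) = 2 * (x::real)"
  by (simp add: mult.assoc[symmetric])

lemma asm_omega:
  "assemblage (omega r) (c *\<^sub>R mat 1 + pauli_dot b) = (c/2) *\<^sub>R mat 1 + pauli_dot ((-r/2) *\<^sub>R b)"
  unfolding qop_eq asm_ent
  by (simp add: complex_eq_iff sum_2 omega_ent field_simps sqrt2_assoc)



lemma pauli_neg: "pauli_dot (- x) = - pauli_dot x"
  using pauli_linear by (rule linear_neg)

lemma N_third: "N (1/3) = 4"
  unfolding N_def
proof (rule Least_equality)
  show "\<exists>P. is_povm 4 P \<and> simulates 4 P unit_sphere (\<lambda>_. 2) (Pfam (1/3))"
    using Tet_povm sim_noisy_proj[OF tet_sim_noisy] by blast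
next
  fix n assume "\<exists>P. is_povm n P \<and> simulates n P unit_sphere (\<lambda>_. 2) (Pfam (1/3))"
  then obtain P where sim: "simulates n P unit_sphere (\<lambda>_. 2) (Pfam (1/3))" by blast
  have inspan: "mat 1 + (1/3) *\<^sub>R pauli_dot v \<in> span (P ` {..<n})" if v: "v \<in> unit_sphere" for v
  proof -
    obtain p where p: "\<forall>a<2. Pfam (1/3) v a = (\<Sum>i<n. p a i *\<^sub>R P i)"
      using sim v unfolding simulates_def by blast
    have "mat 1 + (1/3) *\<^sub>R pauli_dot v = 2 *\<^sub>R Pfam (1/3) v 0"
      unfolding Pfam0 pauli_scale by (simp add: scaleR_add_right)
    also have "\<dots> = 2 *\<^sub>R (\<Sum>i<n. p 0 i *\<^sub>R P i)" using p by simp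
    also have "\<dots> \<in> span (P ` {..<n})"
      apply (rule span_scale, rule span_sum, rule span_scale) by (auto intro: span_base)
    finally show ?thesis .
  qed
  have "4 \<le> card (P ` {..<n})" by (rule dimD[OF _ _ inspan]) simp_all
  also have "\<dots> \<le> n" using card_image_le[of "{..<n}" P] by simp
  finally show "4 \<le> n" .
qed

definition st :: "nat \<Rightarrow> qop" where
  "st i = (1/2) *\<^sub>R mat 1 + pauli_dot ((-1/2) *\<^sub>R tv i)"

lemma st_density: "i < 4 \<Longrightarrow> density (st i)"
  unfolding density_def
proof
  assume "i < 4"
  then have "norm ((-1/2) *\<^sub>R tv i) \<le> 1/2" using tv_norm by simp
  then show "psd (st i)" unfolding st_def by (rule psd_of_bloch)
  show "trace (st i) = 1" by (simp add: st_def trace_def sum_2)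
qed

lemma lhs_comb:
  "(\<Sum>i<4. ((\<alpha> + inner \<beta> (tv i)) * (1/4)) *\<^sub>R st i) = (\<alpha>/2) *\<^sub>R mat 1 + pauli_dot ((-1/6) *\<^sub>R \<beta>)"
proof -
  have "(\<Sum>i<4. ((\<alpha> + inner \<beta> (tv i)) * (1/4)) *\<^sub>R st i) =
     (\<Sum>i<4. ((\<alpha> + inner \<beta> (tv i)) * (1/4)) * (1/2)) *\<^sub>R mat 1 +
     pauli_dot (\<Sum>i<4. ((\<alpha> + inner \<beta> (tv i)) * (1/4)) *\<^sub>R ((-1/2) *\<^sub>R tv i))"
    unfolding st_def by (rule sum_decomp)
  also have "(\<Sum>i<4. ((\<alpha> + inner \<beta> (tv i)) * (1/4)) * (1/2)) = \<alpha>/2"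
    by (simp add: sum4 inner3 algebra_simps)
  also have "(\<Sum>i<4. ((\<alpha> + inner \<beta> (tv i)) * (1/4)) *\<^sub>R ((-1/2) *\<^sub>R tv i)) = (-1/6) *\<^sub>R \<beta>"
    unfolding vec_eq_iff forall_3 sum4 by (simp add: inner3 algebra_simps s3_sq')
  finally show ?thesis .
qed

lemma lhs4: "X \<subseteq> all_povms \<Longrightarrow> has_LHS 4 (omega (1/3)) X"
  unfolding has_LHS_def
proof (rule exI[of _ "\<lambda>_. 1/4"], rule exI[of _ st], rule exI[of _ "\<lambda>x. tp (snd x)"], intro conjI ballI allI impI)
  assume X: "X \<subseteq> all_povms"
  show "(\<Sum>i<(4::nat). (1/4::real)) = 1" by simp
  fix i :: nat assume "i < 4" then show "density (st i)" by (rule st_density)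
next
  fix i :: nat show "0 \<le> (1/4::real)" by simp
next
  assume X: "X \<subseteq> all_povms"
  fix x assume "x \<in> X"
  then obtain m M where x: "x = (m, M)" and pv: "is_povm m M" using X unfolding all_povms_def by auto
  {
    fix a i :: nat assume "a < fst x" "i < 4"
    then show "0 \<le> tp (snd x) a i" using tp_nonneg pv x by simp
  next
    fix i :: nat assume "i < 4" show "(\<Sum>a<fst x. tp (snd x) a i) = 1" using tp_sum pv x by simp
  next
    fix a :: nat assume "a < fst x"
    then have h: "herm (M a)" using herm_povm pv x by simp
    have "assemblage (omega (1/3)) (snd x a) = (coefI (M a)/2) *\<^sub>R mat 1 + pauli_dot ((-1/6) *\<^sub>R bvec (M a))"
      using asm_omega[of "1/3" "coefI (M a)" "bvec (M a)"] herm_decomp[OF h] x by simp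
    also have "\<dots> = (\<Sum>i<4. (tp (snd x) a i * (1/4)) *\<^sub>R st i)"
      unfolding x snd_conv tp_def lhs_comb ..
    finally show "assemblage (omega (1/3)) (snd x a) = (\<Sum>i<4. (tp (snd x) a i * (1/4)) *\<^sub>R st i)" .
  }
qed

lemma gamma_third: "gamma (omega (1/3)) = 4"
  unfolding gamma_def
proof (rule Least_equality)
  show "\<forall>X. X \<subseteq> all_povms \<longrightarrow> has_LHS 4 (omega (1/3)) X" using lhs4 by blast
next
  fix n assume "\<forall>X. X \<subseteq> all_povms \<longrightarrow> has_LHS n (omega (1/3)) X"
  then have "has_LHS n (omega (1/3)) all_povms" by blast
  then obtain q stt p where
    h: "\<forall>x\<in>all_povms. \<forall>a<fst x. assemblage (omega (1/3)) (snd x a) = (\<Sum>i<n. (p x a i * q i) *\<^sub>R stt i)"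
    unfolding has_LHS_def by blast
  have inspan: "mat 1 + (-1/3) *\<^sub>R pauli_dot v \<in> span (stt ` {..<n})" if v: "v \<in> unit_sphere" for v
  proof -
    have mem: "(2::nat, Pfam 1 v) \<in> all_povms" using proj_povm[OF v] unfolding all_povms_def by simp
    have e: "assemblage (omega (1/3)) (Pfam 1 v 0) = (\<Sum>i<n. (p (2, Pfam 1 v) 0 i * q i) *\<^sub>R stt i)"
      using h mem by fastforce
    have "mat 1 + (-1/3) *\<^sub>R pauli_dot v = 4 *\<^sub>R assemblage (omega (1/3)) (Pfam 1 v 0)"
      unfolding Pfam0 unfolding asm_omega by (simp add: pauli_scale pauli_neg scaleR_add_right scaleR_diff_right)
    also have "\<dots> = 4 *\<^sub>R (\<Sum>i<n. (p (2, Pfam 1 v) 0 i * q i) *\<^sub>R stt i)" using e by simp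
    also have "\<dots> \<in> span (stt ` {..<n})"
      apply (rule span_scale, rule span_sum, rule span_scale) by (auto intro: span_base)
    finally show ?thesis .
  qed
  have "4 \<le> card (stt ` {..<n})" by (rule dimD[OF _ _ inspan]) simp_all
  also have "\<dots> \<le> n" using card_image_le[of "{..<n}" stt] by simp
  finally show "4 \<le> n" .
qed

lemma R4: "R 4 = 1/3"
  unfolding R_def
proof (rule cSup_eq_maximum)
  show "1/3 \<in> {r. 0 \<le> r \<and> r \<le> 1 \<and> (\<exists>P. is_povm 4 P \<and> simulates 4 P unit_sphere (\<lambda>_. 2) (Pfam r))}"
    using Tet_povm sim_noisy_proj[OF tet_sim_noisy] by auto
next
  fix x assume "x \<in> {r. 0 \<le> r \<and> r \<le> 1 \<and> (\<exists>P. is_povm 4 P \<and> simulates 4 P unit_sphere (\<lambda>_. 2) (Pfam r))}"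
  then show "x \<le> 1/3" using sim_bound by blast
qed

lemma RPOVM4: "R_POVM 4 = 1/3"
  unfolding R_POVM_def
proof (rule cSup_eq_maximum)
  show "1/3 \<in> {r. 0 \<le> r \<and> r \<le> 1 \<and> (\<exists>P. is_povm 4 P \<and> simulates 4 P all_povms fst (noisy r))}"
    using Tet_povm tet_sim_noisy by auto
next
  fix x assume "x \<in> {r. 0 \<le> r \<and> r \<le> 1 \<and> (\<exists>P. is_povm 4 P \<and> simulates 4 P all_povms fst (noisy r))}"
  then show "x \<le> 1/3" using sim_bound sim_noisy_proj by blast
qed

theorem mainTheorem16:
  shows "R_POVM 4 = R 4 \<and> gamma (omega (1/3)) = N (1/3)"
  using RPOVM4 R4 gamma_third N_third by simp


end
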